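(* Let $Y$ be a sofic shift. For any labeled graph $(G,L_G)$ presenting $Y$ which is right-resolving, regular and follower-separated, the number $\# V_G$ of vertices is at most the number of distinct sets $F(y)$, $y\in Y$. Moreover, the future cover $(\mathbb K(Y),L_{\mathbb K(Y)})$ is, up to isomorphism of labeled graphs, the only presentation of $Y$ which is right-resolving, regular and follower-separated and whose number of vertices equals the number of distinct sets $F(y)$, $y\in Y$.
   Context: A labeled graph $(G,L_G)$: finite directed graph $G$ (vertices $V_G$, edges $E_G$, source/terminal maps $s_G,t_G$), without sinks or sources, with labeling $L_G:E_G\to A$, $A$ a finite alphabet; $X_G$ is its edge shift; $L_G$ acts coordinatewise on paths; it presents $Y=L_G(X_G)$. $X_G[0,\infty)$ denotes right-infinite paths, $X_G(-\infty,-1]$ left-infinite paths; $s_G$ of a right-infinite path is the source of its first edge, $t_G$ of a left-infinite path is the terminal vertex of its last edge; $Y[0,\infty)=\{y_{[0,\infty)}:y\in Y\}$. Right-resolving: distinct edges with the same source have distinct labels. Follower set of a vertex: $f_G(v)=\{L_G(x):x\in X_G[0,\infty), s_G(x)=v\}$. For $y\in Y$: $F(y)=\{w\in Y[0,\infty): y_{(-\infty,-1]}w\in Y\}$ (the follower sets of $Y$). A vertex $v$ is regular if there is $z\in X_G$ with $t_G(z_{(-\infty,-1]})=v$ and $f_G(v)=F(L_G(z))$; the labeled graph is regular if all vertices are regular. Follower-separated: $f_G(v)=f_G(w)$ implies $v=w$. Future cover $(\mathbb K(Y),L_{\mathbb K(Y)})$: vertices are the distinct sets $F(y)$, $y\in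 Y$; there is an edge labeled $a\in A$ from $F(y)$ to $F(z)$ exactly when $F(z)=\{w\in A^{\mathbb N}: aw\in F(y)\}$ (one edge per such pair and label). Isomorphism of labeled graphs: a graph isomorphism preserving labels. *)

theory Defs
  imports Main
begin

record ('v, 'e, 'a) lgraph =
  verts :: "'v set"
  edges :: "'e set"
  src   :: "'e \<Rightarrow> 'v"
  trg   :: "'e \<Rightarrow> 'v"
  lab   :: "'e \<Rightarrow> 'a"

definition lgraph :: "('v, 'e, 'a) lgraph \<Rightarrow> bool" where
  "lgraph G \<longleftrightarrow> finite (verts G) \<and> finite (edges G)
     \<and> (\<forall>e\<in>edges G. src G e \<in> verts G \<and> trg G e \<in> verts G)
     \<and> (\<forall>v\<in>verts G. (\<exists>e\<in>edges G. src G e = v) \<and> (\<exists>e\<in>edges G. trg G e = v))"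

definition edge_shift :: "('v, 'e, 'a) lgraph \<Rightarrow> (int \<Rightarrow> 'e) set" where
  "edge_shift G = {x. (\<forall>i. x i \<in> edges G) \<and> (\<forall>i. trg G (x i) = src G (x (i + 1)))}"

definition right_paths :: "('v, 'e, 'a) lgraph \<Rightarrow> (nat \<Rightarrow> 'e) set" where
  "right_paths G = {x. (\<forall>n. x n \<in> edges G) \<and> (\<forall>n. trg G (x n) = src G (x (Suc n)))}"

definition presented :: "('v, 'e, 'a) lgraph \<Rightarrow> (int \<Rightarrow> 'a) set" where
  "presented G = (\<lambda>x. lab G \<circ> x) ` edge_shift G"

definition presents :: "('v, 'e, 'a) lgraph \<Rightarrow> (int \<Rightarrow> 'a) set \<Rightarrow> bool" where
  "presents G Y \<longleftrightarrow> lgraph G \<and> presented G = Y"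

text \<open>Sofic shift: presented by some (finite) labeled graph.  Finite vertex/edge
  sets can always be encoded in nat, so nat-typed graphs suffice.\<close>
definition sofic :: "(int \<Rightarrow> 'a) set \<Rightarrow> bool" where
  "sofic Y \<longleftrightarrow> (\<exists>G :: (nat, nat, 'a) lgraph. presents G Y)"

definition right_resolving :: "('v, 'e, 'a) lgraph \<Rightarrow> bool" where
  "right_resolving G \<longleftrightarrow>
     (\<forall>e1\<in>edges G. \<forall>e2\<in>edges G. src G e1 = src G e2 \<and> lab G e1 = lab G e2 \<longrightarrow> e1 = e2)"

definition vfollower :: "('v, 'e, 'a) lgraph \<Rightarrow> 'v \<Rightarrow> (nat \<Rightarrow> 'a) set" where
  "vfollower G v = {lab G \<circ> x | x. x \<in> right_paths G \<and> src G (x 0) = v}"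

definition right_rays :: "(int \<Rightarrow> 'a) set \<Rightarrow> (nat \<Rightarrow> 'a) set" where
  "right_rays Y = {(\<lambda>n. y (int n)) | y. y \<in> Y}"

definition glue :: "(int \<Rightarrow> 'a) \<Rightarrow> (nat \<Rightarrow> 'a) \<Rightarrow> (int \<Rightarrow> 'a)" where
  "glue y w = (\<lambda>i. if i < 0 then y i else w (nat i))"

definition follower :: "(int \<Rightarrow> 'a) set \<Rightarrow> (int \<Rightarrow> 'a) \<Rightarrow> (nat \<Rightarrow> 'a) set" where
  "follower Y y = {w. w \<in> right_rays Y \<and> glue y w \<in> Y}"

definition follower_sets :: "(int \<Rightarrow> 'a) set \<Rightarrow> (nat \<Rightarrow> 'a) set set" where
  "follower_sets Y = follower Y ` Y"

definition regular_vertex :: "('v, 'e, 'a) lgraph \<Rightarrow> 'v \<Rightarrow> bool" where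
  "regular_vertex G v \<longleftrightarrow>
     (\<exists>z\<in>edge_shift G. trg G (z (-1)) = v \<and>
        vfollower G v = follower (presented G) (lab G \<circ> z))"

definition regular :: "('v, 'e, 'a) lgraph \<Rightarrow> bool" where
  "regular G \<longleftrightarrow> (\<forall>v\<in>verts G. regular_vertex G v)"

definition follower_separated :: "('v, 'e, 'a) lgraph \<Rightarrow> bool" where
  "follower_separated G \<longleftrightarrow>
     (\<forall>v\<in>verts G. \<forall>w\<in>verts G. vfollower G v = vfollower G w \<longrightarrow> v = w)"

text \<open>Future cover K(Y): vertices are the F(y); an edge labeled a from u to v
  exactly when v = {w. a w \<in> u}; edges are triples (u, a, v).\<close>
definition future_cover :: "(int \<Rightarrow> 'a) set \<Rightarrow>
    ((nat \<Rightarrow> 'a) set, (nat \<Rightarrow> 'a) set \<times> 'a \<times> (nat \<Rightarrow> 'a) set, 'a) lgraph" where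
  "future_cover Y =
     \<lparr> verts = follower_sets Y,
       edges = {(u, a, v). u \<in> follower_sets Y \<and> v \<in> follower_sets Y
                           \<and> v = {w. case_nat a w \<in> u}},
       src = fst, trg = (\<lambda>e. snd (snd e)), lab = (\<lambda>e. fst (snd e)) \<rparr>"

definition lg_iso :: "('v, 'e, 'a) lgraph \<Rightarrow> ('w, 'f, 'a) lgraph \<Rightarrow> bool" where
  "lg_iso G H \<longleftrightarrow> (\<exists>\<phi> \<psi>. bij_betw \<phi> (verts G) (verts H) \<and> bij_betw \<psi> (edges G) (edges H)
     \<and> (\<forall>e\<in>edges G. src H (\<psi> e) = \<phi> (src G e) \<and> trg H (\<psi> e) = \<phi> (trg G e)
                    \<and> lab H (\<psi> e) = lab G e))"

end

theory Submission
  imports Defs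
begin

lemma pigeon_mono:
  assumes "finite S" "\<And>n. \<exists>s\<in>S. P n s" "\<And>n n' s. P n s \<Longrightarrow> n' \<le> n \<Longrightarrow> P n' s"
  shows "\<exists>s\<in>S. \<forall>n::nat. P n s"
proof (rule ccontr)
  assume "\<not> ?thesis"
  then have "\<forall>s\<in>S. \<exists>n. \<not> P n s" by blast
  then obtain N where N: "\<And>s. s \<in> S \<Longrightarrow> \<not> P (N s) s" by metis
  obtain s where s: "s \<in> S" "P (sum N S) s" using assms(2) by blast
  have "N s \<le> sum N S" using assms(1) s(1) by (simp add: member_le_sum)
  then have "P (N s) s" using assms(3) s(2) by blast
  then show False using N s(1) by blast
qed

definition good :: "(nat \<Rightarrow> 's \<Rightarrow> 's \<Rightarrow> bool) \<Rightarrow> nat \<Rightarrow> 's \<Rightarrow> bool" where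
  "good R n s \<longleftrightarrow> (\<forall>m. \<exists>f. f 0 = s \<and> (\<forall>k<m. R (n+k) (f k) (f (Suc k))))"

lemma good_step:
  assumes "finite S" "\<And>k s s'. R k s s' \<Longrightarrow> s' \<in> S" "good R n s"
  shows "\<exists>s'. R n s s' \<and> good R (Suc n) s'"
proof -
  let ?Q = "\<lambda>m s'. R n s s' \<and> (\<exists>f. f 0 = s' \<and> (\<forall>k<m. R (Suc n + k) (f k) (f (Suc k))))"
  have "\<exists>s'\<in>S. \<forall>m. ?Q m s'"
  proof (rule pigeon_mono[OF assms(1)])
    fix m
    obtain f where f: "f 0 = s" "\<forall>k<Suc m. R (n+k) (f k) (f (Suc k))"
      using assms(3) unfolding good_def by blast
    have r0: "R (n+0) (f 0) (f (Suc 0))" using f(2) by blast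
    have r: "R n s (f (Suc 0))" using r0 f(1) by simp
    have sh: "\<forall>k<m. R (Suc n + k) (f (Suc k)) (f (Suc (Suc k)))"
    proof (intro allI impI)
      fix k assume "k < m"
      then have "R (n + Suc k) (f (Suc k)) (f (Suc (Suc k)))" using f(2)[rule_format, of "Suc k"] by simp
      then show "R (Suc n + k) (f (Suc k)) (f (Suc (Suc k)))" by simp
    qed
    have "?Q m (f (Suc 0))" using r sh by (intro conjI exI[of _ "\<lambda>k. f (Suc k)"]) auto
    then show "\<exists>s'\<in>S. ?Q m s'" using assms(2)[OF r] by blast
  next
    fix m m' s' assume a: "?Q m s'" "m' \<le> m"
    then obtain f where "f 0 = s'" "\<forall>k<m. R (Suc n + k) (f k) (f (Suc k))" by blast
    then have "f 0 = s' \<and> (\<forall>k<m'. R (Suc n + k) (f k) (f (Suc k)))" using a(2) by auto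
    then show "?Q m' s'" using a(1) by blast
  qed
  then obtain s' where s': "\<forall>m. ?Q m s'" by blast
  have "R n s s'" using s'[rule_format, of 0] by (rule conjunct1)
  moreover have "good R (Suc n) s'" unfolding good_def
  proof
    fix m show "\<exists>f. f 0 = s' \<and> (\<forall>k<m. R (Suc n + k) (f k) (f (Suc k)))"
      using s'[rule_format, of m] by (rule conjunct2)
  qed
  ultimately show ?thesis by blast
qed

lemma koenig:
  assumes "finite S" "\<And>k s s'. R k s s' \<Longrightarrow> s' \<in> S"
    and "\<And>m. \<exists>f. f 0 = s0 \<and> (\<forall>k<m. R k (f k) (f (Suc k)))"
  shows "\<exists>f. f 0 = s0 \<and> (\<forall>k. R k (f k) (f (Suc k)))"
proof -
  define fs where "fs = rec_nat s0 (\<lambda>k s. SOME s'. R k s s' \<and> good R (Suc k) s')"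
  have fs0: "fs 0 = s0" and fsS: "\<And>k. fs (Suc k) = (SOME s'. R k (fs k) s' \<and> good R (Suc k) s')"
    unfolding fs_def by simp_all
  have g: "good R k (fs k)" for k
  proof (induction k)
    case 0
    show ?case using assms(3) fs0 unfolding good_def by simp
  next
    case (Suc k)
    have ex: "\<exists>s'. R k (fs k) s' \<and> good R (Suc k) s'" by (rule good_step[OF assms(1,2) Suc])
    show ?case unfolding fsS[of k] using someI_ex[OF ex] by blast
  qed
  have "R k (fs k) (fs (Suc k))" for k
  proof -
    have ex: "\<exists>s'. R k (fs k) s' \<and> good R (Suc k) s'" by (rule good_step[OF assms(1,2) g])
    show ?thesis unfolding fsS[of k] using someI_ex[OF ex] by blast
  qed
  then show ?thesis using fs0 by blast
qed

lemma closed_pres: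
  assumes H: "lgraph H"
    and app: "\<And>n::nat. \<exists>q\<in>presented H. \<forall>i. - int n \<le> i \<and> i \<le> int n \<longrightarrow> q i = y i"
  shows "y \<in> presented H"
proof -
  define P where "P = (\<lambda>(n::nat) e. \<exists>x\<in>edge_shift H. x 0 = e \<and> (\<forall>i. - int n \<le> i \<and> i \<le> int n \<longrightarrow> lab H (x i) = y i))"
  have finE: "finite (edges H)" using H unfolding lgraph_def by blast
  have "\<exists>e\<in>edges H. \<forall>n. P n e"
  proof (rule pigeon_mono[OF finE])
    fix n
    obtain q where q: "q \<in> presented H" "\<forall>i. - int n \<le> i \<and> i \<le> int n \<longrightarrow> q i = y i" using app by blast
    obtain x where x: "x \<in> edge_shift H" "q = lab H \<circ> x" using q(1) unfolding presented_def by blast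
    have "x 0 \<in> edges H" using x(1) unfolding edge_shift_def by blast
    moreover have "P n (x 0)" unfolding P_def using x q(2) by auto
    ultimately show "\<exists>e\<in>edges H. P n e" by blast
  next
    fix n n' e assume "P n e" "n' \<le> n" then show "P n' e" unfolding P_def by fastforce
  qed
  then obtain e0 where e0: "e0 \<in> edges H" "\<And>n. P n e0" by blast
  define R where "R = (\<lambda>(k::nat) e e'. e' \<in> edges H \<and> src H e' = trg H e \<and> lab H e' = y (int k + 1))"
  define L where "L = (\<lambda>(k::nat) e e'. e' \<in> edges H \<and> trg H e' = src H e \<and> lab H e' = y (- int k - 1))"
  have "\<exists>f. f 0 = e0 \<and> (\<forall>k. R k (f k) (f (Suc k)))"
  proof (rule koenig[OF finE])
    fix k s s' assume "R k s s'" then show "s' \<in> edges H" unfolding R_def by blast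
  next
    fix m
    obtain x where x: "x \<in> edge_shift H" "x 0 = e0" "\<forall>i. - int m \<le> i \<and> i \<le> int m \<longrightarrow> lab H (x i) = y i"
      using e0(2)[of m] unfolding P_def by blast
    have "\<forall>k<m. R k (x (int k)) (x (int (Suc k)))"
    proof (intro allI impI)
      fix k assume k: "k < m"
      have "x (int k + 1) \<in> edges H" "trg H (x (int k)) = src H (x (int k + 1))"
        using x(1) unfolding edge_shift_def by auto
      moreover have "lab H (x (int k + 1)) = y (int k + 1)" using x(3) k by auto
      ultimately show "R k (x (int k)) (x (int (Suc k)))" unfolding R_def by (simp add: add.commute)
    qed
    then show "\<exists>f. f 0 = e0 \<and> (\<forall>k<m. R k (f k) (f (Suc k)))"
      using x(2) by (intro exI[of _ "\<lambda>k. x (int k)"]) simp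
  qed
  then obtain f where f: "f 0 = e0" "\<And>k. R k (f k) (f (Suc k))" by blast
  have "\<exists>g. g 0 = e0 \<and> (\<forall>k. L k (g k) (g (Suc k)))"
  proof (rule koenig[OF finE])
    fix k s s' assume "L k s s'" then show "s' \<in> edges H" unfolding L_def by blast
  next
    fix m
    obtain x where x: "x \<in> edge_shift H" "x 0 = e0" "\<forall>i. - int m \<le> i \<and> i \<le> int m \<longrightarrow> lab H (x i) = y i"
      using e0(2)[of m] unfolding P_def by blast
    have "\<forall>k<m. L k (x (- int k)) (x (- int (Suc k)))"
    proof (intro allI impI)
      fix k assume k: "k < m"
      have "x (- int k - 1) \<in> edges H" "trg H (x (- int k - 1)) = src H (x (- int k - 1 + 1))"
        using x(1) unfolding edge_shift_def by auto
      moreover have "lab H (x (- int k - 1)) = y (- int k - 1)" using x(3) k by auto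
      moreover have "- int (Suc k) = - int k - 1" by simp
      then have eqx: "x (- int (Suc k)) = x (- int k - 1)" by (rule arg_cong)
      ultimately show "L k (x (- int k)) (x (- int (Suc k)))" unfolding L_def eqx by simp
    qed
    then show "\<exists>f. f 0 = e0 \<and> (\<forall>k<m. L k (f k) (f (Suc k)))"
      using x(2) by (intro exI[of _ "\<lambda>k. x (- int k)"]) simp
  qed
  then obtain g where g: "g 0 = e0" "\<And>k. L k (g k) (g (Suc k))" by blast
  define x where "x = (\<lambda>i::int. if 0 \<le> i then f (nat i) else g (nat (- i)))"
  have fE: "f k \<in> edges H" for k
    using f e0(1) unfolding R_def by (cases k) auto
  have gE: "g k \<in> edges H" for k
    using g e0(1) unfolding L_def by (cases k) auto
  have y0: "lab H e0 = y 0" using e0(2)[of 0] unfolding P_def by auto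
  have xE: "x i \<in> edges H" for i unfolding x_def using fE gE by simp
  have xT: "trg H (x i) = src H (x (i + 1))" for i
  proof (cases "0 \<le> i")
    case True
    then have "nat (i + 1) = Suc (nat i)" by simp
    then show ?thesis unfolding x_def using True f(2)[of "nat i"] unfolding R_def by simp
  next
    case False
    show ?thesis
    proof (cases "i = -1")
      case True
      then show ?thesis unfolding x_def using g(2)[of 0] f(1) g(1) unfolding L_def by simp
    next
      case False2: False
      then have "nat (- i) = Suc (nat (- (i + 1)))" "\<not> 0 \<le> i + 1" using False by auto
      then show ?thesis unfolding x_def using False g(2)[of "nat (- (i+1))"] unfolding L_def by simp
    qed
  qed
  have xL: "lab H (x i) = y i" for i
  proof (cases "0 \<le> i")
    case True
    show ?thesis
    proof (cases "i = 0")
      case True then show ?thesis unfolding x_def using f(1) y0 by simp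
    next
      case False
      then have "nat i = Suc (nat (i - 1))" using True by auto
      then show ?thesis unfolding x_def using True f(2)[of "nat (i - 1)"] False unfolding R_def by simp
    qed
  next
    case False
    then have "nat (- i) = Suc (nat (- i - 1))" by auto
    then show ?thesis unfolding x_def using False g(2)[of "nat (- i - 1)"] unfolding L_def by simp
  qed
  have "x \<in> edge_shift H" unfolding edge_shift_def using xE xT by blast
  moreover have "y = lab H \<circ> x" using xL by auto
  ultimately show ?thesis unfolding presented_def by blast
qed

definition sh :: "int \<Rightarrow> (int \<Rightarrow> 'a) \<Rightarrow> int \<Rightarrow> 'a" where
  "sh k y = (\<lambda>i. y (i + k))"

definition pre :: "nat \<Rightarrow> (nat \<Rightarrow> 'a) \<Rightarrow> (nat \<Rightarrow> 'a) \<Rightarrow> nat \<Rightarrow> 'a" where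
  "pre k a v = (\<lambda>m. if m < k then a m else v (m - k))"

lemma sh_sh: "sh a (sh b y) = sh (a + b) y"
  unfolding sh_def by (simp add: ac_simps)

lemma sh_0: "sh 0 y = y" unfolding sh_def by simp

lemma shift_inv: "y \<in> presented H \<Longrightarrow> sh k y \<in> presented H"
proof -
  assume "y \<in> presented H"
  then obtain x where x: "x \<in> edge_shift H" "y = lab H \<circ> x" unfolding presented_def by blast
  have "(\<lambda>i. x (i + k)) \<in> edge_shift H" using x(1) unfolding edge_shift_def
    by (auto simp: algebra_simps)
  moreover have "sh k y = lab H \<circ> (\<lambda>i. x (i + k))" using x(2) unfolding sh_def by auto
  ultimately show ?thesis unfolding presented_def by blast
qed

lemma follower_simp: "follower Y y = {w. glue y w \<in> Y}"
proof -
  have "glue y w \<in> Y \<Longrightarrow> w \<in> right_rays Y" for w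
  proof -
    assume "glue y w \<in> Y"
    moreover have "w = (\<lambda>n. glue y w (int n))" unfolding glue_def by simp
    ultimately show ?thesis unfolding right_rays_def by blast
  qed
  then show ?thesis unfolding follower_def by blast
qed

lemma glue_glue: "glue (glue y w) v = glue y v" unfolding glue_def by auto

lemma glue_self: "glue y (\<lambda>n. y (int n)) = y" unfolding glue_def by auto

lemma follower_glue: "follower Y (glue y w) = follower Y y"
  unfolding follower_simp glue_glue ..

lemma sh_glue: "sh 1 (glue y (case_nat (y 0) w)) = glue (sh 1 y) w"
proof
  fix i :: int
  show "sh 1 (glue y (case_nat (y 0) w)) i = glue (sh 1 y) w i"
  proof (cases "i < -1")
    case True then show ?thesis unfolding sh_def glue_def by simp
  next
    case False
    show ?thesis
    proof (cases "i = -1")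
      case True then show ?thesis unfolding sh_def glue_def by simp
    next
      case False2: False
      then have "nat (i + 1) = Suc (nat i)" "0 \<le> i" using False by auto
      then show ?thesis unfolding sh_def glue_def by simp
    qed
  qed
qed

lemma lemA:
  assumes SI: "\<And>k y. y \<in> Y \<Longrightarrow> sh k y \<in> Y"
  shows "{w. case_nat (y 0) w \<in> follower Y y} = follower Y (sh 1 y)"
proof -
  have "glue y (case_nat (y 0) w) \<in> Y \<longleftrightarrow> glue (sh 1 y) w \<in> Y" for w
  proof
    assume "glue y (case_nat (y 0) w) \<in> Y"
    then show "glue (sh 1 y) w \<in> Y" using SI[of _ 1] sh_glue by metis
  next
    assume "glue (sh 1 y) w \<in> Y"
    then have "sh (-1) (sh 1 (glue y (case_nat (y 0) w))) \<in> Y" using SI sh_glue by metis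
    then show "glue y (case_nat (y 0) w) \<in> Y" by (simp add: sh_sh sh_0)
  qed
  then show ?thesis unfolding follower_simp by blast
qed

lemma pre_lemma:
  assumes "\<And>k. U (Suc k) = {v. case_nat (a k) v \<in> U k}"
  shows "v \<in> U k \<Longrightarrow> pre k a v \<in> U 0"
proof (induction k arbitrary: v)
  case 0 then show ?case unfolding pre_def by simp
next
  case (Suc k)
  then have "case_nat (a k) v \<in> U k" using assms by blast
  then have "pre k a (case_nat (a k) v) \<in> U 0" using Suc.IH by blast
  moreover have "pre k a (case_nat (a k) v) = pre (Suc k) a v"
  proof
    fix m show "pre k a (case_nat (a k) v) m = pre (Suc k) a v m"
    proof (cases "m < Suc k")
      case True then show ?thesis unfolding pre_def by (cases "m = k") auto
    next
      case False
      then have "m - k = Suc (m - Suc k)" by arith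
      then show ?thesis using False unfolding pre_def by simp
    qed
  qed
  ultimately show ?case by simp
qed

lemma finite_FS:
  assumes H: "lgraph H"
  shows "finite (follower_sets (presented H))"
proof -
  let ?Y = "presented H"
  define \<Phi> where "\<Phi> T = {w. \<exists>x\<in>edge_shift H. src H (x 0) \<in> T \<and> (\<forall>n::nat. lab H (x (int n)) = w n)}" for T
  define TT where "TT y = {src H (x 0) | x. x \<in> edge_shift H \<and> (\<forall>i<0. lab H (x i) = y i)}" for y :: "int \<Rightarrow> 'c"
  have eq: "follower ?Y y = \<Phi> (TT y)" for y
  proof
    show "follower ?Y y \<subseteq> \<Phi> (TT y)"
    proof
      fix w assume "w \<in> follower ?Y y"
      then obtain x where x: "x \<in> edge_shift H" "glue y w = lab H \<circ> x"
        unfolding follower_simp presented_def by auto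
      have "\<forall>i<0. lab H (x i) = y i"
      proof (intro allI impI)
        fix i :: int assume "i < 0"
        then show "lab H (x i) = y i" using x(2)[THEN fun_cong, of i] unfolding glue_def by simp
      qed
      then have "src H (x 0) \<in> TT y" unfolding TT_def using x(1) by blast
      moreover have "\<forall>n::nat. lab H (x (int n)) = w n"
      proof
        fix n :: nat show "lab H (x (int n)) = w n" using x(2)[THEN fun_cong, of "int n"] unfolding glue_def by simp
      qed
      ultimately show "w \<in> \<Phi> (TT y)" unfolding \<Phi>_def using x(1) by blast
    qed
  next
    show "\<Phi> (TT y) \<subseteq> follower ?Y y"
    proof
      fix w assume "w \<in> \<Phi> (TT y)"
      then obtain x x' where x: "x \<in> edge_shift H" "\<forall>n::nat. lab H (x (int n)) = w n"
        and x': "x' \<in> edge_shift H" "src H (x' 0) = src H (x 0)" "\<forall>i<0. lab H (x' i) = y i"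
        unfolding \<Phi>_def TT_def by force
      define x'' where "x'' = (\<lambda>i. if i < 0 then x' i else x i)"
      have "x'' \<in> edge_shift H"
        unfolding edge_shift_def
      proof (intro CollectI conjI allI)
        fix i show "x'' i \<in> edges H" using x(1) x'(1) unfolding x''_def edge_shift_def by auto
      next
        fix i show "trg H (x'' i) = src H (x'' (i + 1))"
        proof (cases "i < -1")
          case True then show ?thesis using x'(1) unfolding x''_def edge_shift_def by auto
        next
          case False
          show ?thesis
          proof (cases "i = -1")
            case True then show ?thesis using x'(1,2) unfolding x''_def edge_shift_def by force
          next
            case False2: False
            then show ?thesis using False x(1) unfolding x''_def edge_shift_def by auto
          qed
        qed
      qed
      moreover have "glue y w = lab H \<circ> x''"
      proof
        fix i show "glue y w i = (lab H \<circ> x'') i"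
        proof (cases "i < 0")
          case True then show ?thesis using x'(3) unfolding glue_def x''_def by simp
        next
          case False
          then have "x (int (nat i)) = x i" by simp
          moreover have "lab H (x (int (nat i))) = w (nat i)" using x(2) by blast
          ultimately show ?thesis using False unfolding glue_def x''_def by simp
        qed
      qed
      ultimately show "w \<in> follower ?Y y" unfolding follower_simp presented_def by auto
    qed
  qed
  have "TT y \<subseteq> verts H" for y
    using H unfolding TT_def lgraph_def edge_shift_def by blast
  then have "follower_sets ?Y \<subseteq> \<Phi> ` Pow (verts H)"
    unfolding follower_sets_def using eq by blast
  moreover have "finite (verts H)" using H unfolding lgraph_def by blast
  ultimately show ?thesis by (meson finite_Pow_iff finite_imageI finite_subset)
qed

lemma K_sel:
  "verts (future_cover Y) = follower_sets Y"
  "src (future_cover Y) = fst"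
  "trg (future_cover Y) = (\<lambda>e. snd (snd e))"
  "lab (future_cover Y) = (\<lambda>e. fst (snd e))"
  by (simp_all add: future_cover_def)

lemma K_edges: "(u, a, v) \<in> edges (future_cover Y) \<longleftrightarrow>
    u \<in> follower_sets Y \<and> v \<in> follower_sets Y \<and> v = {w. case_nat a w \<in> u}"
  by (simp add: future_cover_def)

locale pres =
  fixes H :: "('v, 'e, 'a::finite) lgraph" and Y
  assumes H: "lgraph H" and Y: "Y = presented H"
begin

abbreviation "K \<equiv> future_cover Y"
abbreviation "FS \<equiv> follower_sets Y"

lemma SI: "y \<in> Y \<Longrightarrow> sh k y \<in> Y" using shift_inv[of y H k] Y by simp

lemma finFS: "finite FS" using finite_FS[OF H] Y by simp

lemma FS_ne: "u \<in> FS \<Longrightarrow> \<exists>w. w \<in> u"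
proof -
  assume "u \<in> FS"
  then obtain y where y: "y \<in> Y" "u = follower Y y" unfolding follower_sets_def by blast
  have "glue y (\<lambda>n. y (int n)) \<in> Y" using y(1) by (simp only: glue_self)
  then have "(\<lambda>n. y (int n)) \<in> u" unfolding y(2) follower_simp by simp
  then show ?thesis by blast
qed

definition pathK :: "(int \<Rightarrow> 'a) \<Rightarrow> int \<Rightarrow> (nat \<Rightarrow> 'a) set \<times> 'a \<times> (nat \<Rightarrow> 'a) set" where
  "pathK y = (\<lambda>i. (follower Y (sh i y), y i, follower Y (sh (i + 1) y)))"

lemma pathK_edge: "y \<in> Y \<Longrightarrow> pathK y i \<in> edges K"
proof -
  assume y: "y \<in> Y"
  have "{w. case_nat (sh i y 0) w \<in> follower Y (sh i y)} = follower Y (sh 1 (sh i y))"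
    by (rule lemA) (rule SI)
  moreover have "sh i y 0 = y i" unfolding sh_def by simp
  moreover have "sh 1 (sh i y) = sh (i + 1) y" by (simp add: sh_sh add.commute)
  ultimately have "follower Y (sh (i + 1) y) = {w. case_nat (y i) w \<in> follower Y (sh i y)}" by simp
  moreover have "follower Y (sh i y) \<in> FS" "follower Y (sh (i+1) y) \<in> FS"
    using SI[OF y] unfolding follower_sets_def by auto
  ultimately show ?thesis unfolding pathK_def K_edges by simp
qed

lemma pathK_shift: "y \<in> Y \<Longrightarrow> pathK y \<in> edge_shift K"
  unfolding edge_shift_def using pathK_edge by (auto simp: K_sel pathK_def)

lemma pathK_lab: "lab K \<circ> pathK y = y"
  by (auto simp: K_sel pathK_def)

lemma K_lgraph: "lgraph K"
proof -
  have f1: "finite (verts K)" using finFS by (simp add: K_sel)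
  have "edges K \<subseteq> FS \<times> UNIV \<times> FS" by (auto simp: future_cover_def)
  then have f2: "finite (edges K)" using finFS by (meson finite_SigmaI finite_UNIV finite_subset)
  have f3: "\<forall>e\<in>edges K. src K e \<in> verts K \<and> trg K e \<in> verts K" by (auto simp: future_cover_def)
  have f4: "(\<exists>e\<in>edges K. src K e = v) \<and> (\<exists>e\<in>edges K. trg K e = v)" if vK: "v \<in> verts K" for v
  proof -
    obtain y where y: "y \<in> Y" "v = follower Y y" using vK unfolding K_sel follower_sets_def by blast
    have "pathK y 0 \<in> edges K" "pathK y (-1) \<in> edges K" using pathK_edge y by auto
    moreover have "src K (pathK y 0) = v" "trg K (pathK y (-1)) = v" using y
      by (auto simp: K_sel pathK_def sh_0)
    ultimately show ?thesis by blast
  qed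
  show ?thesis unfolding lgraph_def using f1 f2 f3 f4 by blast
qed

lemma K_step:
  assumes "e \<in> edges K"
  shows "snd (snd e) = {w. case_nat (fst (snd e)) w \<in> fst e}" "fst e \<in> FS" "snd (snd e) \<in> FS"
  using assms by (cases e; auto simp: K_edges)+

lemma presK_sub: "presented K \<subseteq> Y"
proof
  fix y assume "y \<in> presented K"
  then obtain z where z: "z \<in> edge_shift K" "y = lab K \<circ> z" unfolding presented_def by blast
  have zE: "z i \<in> edges K" for i using z(1) unfolding edge_shift_def by blast
  have zT: "snd (snd (z i)) = fst (z (i + 1))" for i using z(1) unfolding edge_shift_def by (simp add: K_sel)
  have yL: "y i = fst (snd (z i))" for i using z(2) by (simp add: K_sel)
  have "y \<in> presented H"
  proof (rule closed_pres[OF H])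
    fix n :: nat
    define j where "j = - int n"
    define U where "U k = fst (z (j + int k))" for k
    define a where "a k = y (j + int k)" for k
    have U: "U (Suc k) = {v. case_nat (a k) v \<in> U k}" for k
    proof -
      have "U (Suc k) = snd (snd (z (j + int k)))" unfolding U_def using zT[of "j + int k"]
        by (simp add: ac_simps)
      also have "\<dots> = {v. case_nat (a k) v \<in> U k}" unfolding U_def a_def yL using K_step(1)[OF zE] by simp
      finally show ?thesis .
    qed
    have "U (2 * n + 1) \<in> FS" unfolding U_def using K_step(2)[OF zE] by simp
    then obtain v where v: "v \<in> U (2 * n + 1)" using FS_ne by blast
    have W: "pre (2 * n + 1) a v \<in> U 0" using pre_lemma[of U, OF U v] .
    obtain x' where x': "x' \<in> Y" "U 0 = follower Y x'" using K_step(2)[OF zE] unfolding U_def follower_sets_def by auto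
    define p where "p = glue x' (pre (2 * n + 1) a v)"
    have "p \<in> Y" using W x' unfolding p_def follower_simp by simp
    then have q: "sh (int n) p \<in> presented H" using SI Y by simp
    have "\<forall>i. - int n \<le> i \<and> i \<le> int n \<longrightarrow> sh (int n) p i = y i"
    proof (intro allI impI)
      fix i :: int assume i: "- int n \<le> i \<and> i \<le> int n"
      then have h: "nat (i + int n) < 2 * n + 1" "\<not> i + int n < 0" "j + int (nat (i + int n)) = i"
        unfolding j_def by auto
      then have "a (nat (i + int n)) = y i" unfolding a_def by (simp only: h(3))
      then show "sh (int n) p i = y i" using h unfolding sh_def p_def glue_def pre_def by simp
    qed
    then show "\<exists>q\<in>presented H. \<forall>i. - int n \<le> i \<and> i \<le> int n \<longrightarrow> q i = y i" using q by blast
  qed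
  then show "y \<in> Y" using Y by simp
qed

lemma presK: "presented K = Y"
proof
  show "presented K \<subseteq> Y" by (rule presK_sub)
  show "Y \<subseteq> presented K"
  proof
    fix y assume "y \<in> Y"
    then show "y \<in> presented K" unfolding presented_def using pathK_shift pathK_lab by (metis image_eqI)
  qed
qed

lemma vfK: 
  assumes u: "u \<in> FS"
  shows "vfollower K u = u"
proof
  obtain y where y: "y \<in> Y" "u = follower Y y" using u unfolding follower_sets_def by blast
  show "vfollower K u \<subseteq> u"
  proof
    fix w assume "w \<in> vfollower K u"
    then obtain x where x: "x \<in> right_paths K" "src K (x 0) = u" "w = lab K \<circ> x"
      unfolding vfollower_def by blast
    have xE: "x k \<in> edges K" for k using x(1) unfolding right_paths_def by blast
    have xT: "snd (snd (x k)) = fst (x (Suc k))" for k using x(1) unfolding right_paths_def by (simp add: K_sel)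
    have wL: "w k = fst (snd (x k))" for k using x(3) by (simp add: K_sel)
    have "glue y w \<in> presented H"
    proof (rule closed_pres[OF H])
      fix n :: nat
      define U where "U k = fst (x k)" for k
      have U: "U (Suc k) = {v. case_nat (w k) v \<in> U k}" for k
        unfolding U_def wL using K_step(1)[OF xE, of k] xT[of k] by simp
      have "U (Suc n) \<in> FS" unfolding U_def using K_step(2)[OF xE] by simp
      then obtain v where v: "v \<in> U (Suc n)" using FS_ne by blast
      have W: "pre (Suc n) w v \<in> U 0" using pre_lemma[of U, OF U v] .
      have "U 0 = u" using x(2) unfolding U_def by (simp add: K_sel)
      then have q: "glue y (pre (Suc n) w v) \<in> presented H" using W y Y unfolding follower_simp by simp
      have "\<forall>i. - int n \<le> i \<and> i \<le> int n \<longrightarrow> glue y (pre (Suc n) w v) i = glue y w i"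
        unfolding glue_def pre_def by auto
      then show "\<exists>q\<in>presented H. \<forall>i. - int n \<le> i \<and> i \<le> int n \<longrightarrow> q i = glue y w i" using q by blast
    qed
    then show "w \<in> u" using y Y unfolding follower_simp by simp
  qed
  show "u \<subseteq> vfollower K u"
  proof
    fix w assume "w \<in> u"
    then have p: "glue y w \<in> Y" using y unfolding follower_simp by simp
    define x where "x n = pathK (glue y w) (int n)" for n
    have xE: "x n \<in> edges K" for n unfolding x_def using pathK_edge[OF p] .
    have xT: "trg K (x n) = src K (x (Suc n))" for n unfolding x_def pathK_def by (simp add: K_sel ac_simps)
    have "x \<in> right_paths K" unfolding right_paths_def using xE xT by blast
    moreover have "src K (x 0) = u" unfolding x_def pathK_def using y by (simp add: K_sel sh_0 follower_glue)
    moreover have "w = lab K \<circ> x" unfolding x_def pathK_def by (auto simp: K_sel glue_def)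
    ultimately show "w \<in> vfollower K u" unfolding vfollower_def by blast
  qed
qed

lemma K_all: "presents K Y \<and> right_resolving K \<and> regular K \<and> follower_separated K
          \<and> card (verts K) = card FS"
proof (intro conjI)
  show "presents K Y" unfolding presents_def using K_lgraph presK by simp
  show "right_resolving K" unfolding right_resolving_def by (auto simp: future_cover_def)
  show "follower_separated K" unfolding follower_separated_def using vfK by (simp add: K_sel)
  show "card (verts K) = card FS" by (simp add: K_sel)
  show "regular K" unfolding regular_def
  proof
    fix v assume "v \<in> verts K"
    then obtain y where y: "y \<in> Y" "v = follower Y y" by (auto simp: K_sel follower_sets_def)
    have "pathK y \<in> edge_shift K" using pathK_shift y by simp
    moreover have "trg K (pathK y (-1)) = v" using y by (simp add: K_sel pathK_def sh_0)
    moreover have "vfollower K v = follower (presented K) (lab K \<circ> pathK y)"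
      using vfK y presK pathK_lab \<open>v \<in> verts K\<close> by (simp add: K_sel)
    ultimately show "regular_vertex K v" unfolding regular_vertex_def by blast
  qed
qed

end

lemma vf_step:
  assumes rr: "right_resolving G" and e: "e \<in> edges G"
  shows "vfollower G (trg G e) = {w. case_nat (lab G e) w \<in> vfollower G (src G e)}"
proof
  show "vfollower G (trg G e) \<subseteq> {w. case_nat (lab G e) w \<in> vfollower G (src G e)}"
  proof
    fix w assume "w \<in> vfollower G (trg G e)"
    then obtain x where x: "x \<in> right_paths G" "src G (x 0) = trg G e" "w = lab G \<circ> x"
      unfolding vfollower_def by blast
    define x' where "x' = case_nat e x"
    have "x' n \<in> edges G" for n using x(1) e unfolding x'_def right_paths_def by (cases n) auto
    moreover have "trg G (x' n) = src G (x' (Suc n))" for n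
      using x(1,2) unfolding x'_def right_paths_def by (cases n) auto
    ultimately have "x' \<in> right_paths G" unfolding right_paths_def by blast
    moreover have "case_nat (lab G e) w = lab G \<circ> x'"
    proof
      fix n show "case_nat (lab G e) w n = (lab G \<circ> x') n" using x(3) unfolding x'_def by (cases n) auto
    qed
    moreover have "src G (x' 0) = src G e" unfolding x'_def by simp
    ultimately show "w \<in> {w. case_nat (lab G e) w \<in> vfollower G (src G e)}"
      unfolding vfollower_def by blast
  qed
next
  show "{w. case_nat (lab G e) w \<in> vfollower G (src G e)} \<subseteq> vfollower G (trg G e)"
  proof
    fix w assume "w \<in> {w. case_nat (lab G e) w \<in> vfollower G (src G e)}"
    then obtain x where x: "x \<in> right_paths G" "src G (x 0) = src G e" "case_nat (lab G e) w = lab G \<circ> x"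
      unfolding vfollower_def by blast
    have "lab G (x 0) = lab G e" using x(3)[THEN fun_cong, of 0] by simp
    moreover have "x 0 \<in> edges G" using x(1) unfolding right_paths_def by blast
    ultimately have x0: "x 0 = e" using rr e x(2) unfolding right_resolving_def by blast
    have "(\<lambda>n. x (Suc n)) \<in> right_paths G" using x(1) unfolding right_paths_def by blast
    moreover have "trg G (x 0) = src G (x (Suc 0))" using x(1) unfolding right_paths_def by blast
    then have "src G (x (Suc 0)) = trg G e" using x0 by simp
    moreover have "w = lab G \<circ> (\<lambda>n. x (Suc n))"
    proof
      fix n show "w n = (lab G \<circ> (\<lambda>n. x (Suc n))) n" using x(3)[THEN fun_cong, of "Suc n"] by simp
    qed
    ultimately show "w \<in> vfollower G (trg G e)" unfolding vfollower_def by blast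
  qed
qed

lemma vf_edge:
  assumes "case_nat a w \<in> vfollower G s"
  shows "\<exists>e\<in>edges G. src G e = s \<and> lab G e = a"
proof -
  obtain x where x: "x \<in> right_paths G" "src G (x 0) = s" "case_nat a w = lab G \<circ> x"
    using assms unfolding vfollower_def by blast
  have "lab G (x 0) = a" using x(3)[THEN fun_cong, of 0] by simp
  moreover have "x 0 \<in> edges G" using x(1) unfolding right_paths_def by blast
  ultimately show ?thesis using x(2) by blast
qed

lemma reg_FS:
  assumes "regular G" "v \<in> verts G"
  shows "vfollower G v \<in> follower_sets (presented G)"
proof -
  obtain z where z: "z \<in> edge_shift G" "vfollower G v = follower (presented G) (lab G \<circ> z)"
    using assms unfolding regular_def regular_vertex_def by blast
  have "lab G \<circ> z \<in> presented G" using z(1) unfolding presented_def by blast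
  then show ?thesis using z(2) unfolding follower_sets_def by simp
qed

theorem corollary3p3:
  fixes Y :: "(int \<Rightarrow> 'a::finite) set"
  assumes "sofic Y"
  shows "(\<forall>G :: ('v, 'e, 'a) lgraph.
            presents G Y \<and> right_resolving G \<and> regular G \<and> follower_separated G
            \<longrightarrow> card (verts G) \<le> card (follower_sets Y))
       \<and> (presents (future_cover Y) Y \<and> right_resolving (future_cover Y)
          \<and> regular (future_cover Y) \<and> follower_separated (future_cover Y)
          \<and> card (verts (future_cover Y)) = card (follower_sets Y))
       \<and> (\<forall>G :: ('v, 'e, 'a) lgraph.
            presents G Y \<and> right_resolving G \<and> regular G \<and> follower_separated G
            \<and> card (verts G) = card (follower_sets Y)
            \<longrightarrow> lg_iso G (future_cover Y))"
proof -
  obtain H :: "(nat, nat, 'a) lgraph" where H: "presents H Y" using assms unfolding sofic_def by blast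
  interpret pres H Y using H unfolding presents_def by unfold_locales auto
  have inj: "inj_on (vfollower G) (verts G)" and img: "vfollower G ` verts G \<subseteq> FS"
    if G: "presents G Y" "regular G" "follower_separated G" for G :: "('v, 'e, 'a) lgraph"
  proof -
    show "inj_on (vfollower G) (verts G)" using G(3) unfolding follower_separated_def inj_on_def by blast
    have "presented G = Y" using G(1) unfolding presents_def by blast
    then show "vfollower G ` verts G \<subseteq> FS" using reg_FS[OF G(2)] by auto
  qed
  have c1: "card (verts G) \<le> card FS"
    if G: "presents G Y" "regular G" "follower_separated G" for G :: "('v, 'e, 'a) lgraph"
  proof -
    have "card (verts G) = card (vfollower G ` verts G)" using card_image[OF inj[OF G]] by simp
    also have "\<dots> \<le> card FS" using card_mono[OF finFS img[OF G]] .
    finally show ?thesis .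
  qed
  have c3: "lg_iso G K"
    if G: "presents G Y" "right_resolving G" "regular G" "follower_separated G" "card (verts G) = card FS"
    for G :: "('v, 'e, 'a) lgraph"
  proof -
    let ?\<phi> = "vfollower G"
    let ?\<psi> = "\<lambda>e. (?\<phi> (src G e), lab G e, ?\<phi> (trg G e))"
    have Gl: "lgraph G" using G(1) unfolding presents_def by blast
    have inj': "inj_on ?\<phi> (verts G)" and img': "?\<phi> ` verts G \<subseteq> FS" using inj[OF G(1,3,4)] img[OF G(1,3,4)] by auto
    have "card (?\<phi> ` verts G) = card FS" using card_image[OF inj'] G(5) by simp
    then have imgeq: "?\<phi> ` verts G = FS" using card_subset_eq[OF finFS img'] by simp
    then have bv: "bij_betw ?\<phi> (verts G) FS" using inj' unfolding bij_betw_def by simp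
    have GE: "\<forall>e\<in>edges G. src G e \<in> verts G \<and> trg G e \<in> verts G" using Gl unfolding lgraph_def by (elim conjE)
    have srcV: "src G e \<in> verts G" "trg G e \<in> verts G" if "e \<in> edges G" for e
      using GE that by auto
    have psiE: "?\<psi> e \<in> edges K" if e: "e \<in> edges G" for e
    proof -
      have "?\<phi> (src G e) \<in> FS" "?\<phi> (trg G e) \<in> FS" using img' srcV[OF e] by auto
      then show ?thesis unfolding K_edges using vf_step[OF G(2) e] by simp
    qed
    have "inj_on ?\<psi> (edges G)"
    proof (rule inj_onI)
      fix e1 e2 assume e: "e1 \<in> edges G" "e2 \<in> edges G" "?\<psi> e1 = ?\<psi> e2"
      then have "?\<phi> (src G e1) = ?\<phi> (src G e2)" by simp
      then have "src G e1 = src G e2" using inj_onD[OF inj' _ srcV(1)[OF e(1)] srcV(1)[OF e(2)]] by blast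
      moreover have "lab G e1 = lab G e2" using e(3) by simp
      ultimately show "e1 = e2" using G(2) e(1,2) unfolding right_resolving_def by blast
    qed
    moreover have "?\<psi> ` edges G = edges K"
    proof
      show "?\<psi> ` edges G \<subseteq> edges K" using psiE by blast
      show "edges K \<subseteq> ?\<psi> ` edges G"
      proof
        fix t assume t: "t \<in> edges K"
        obtain u a v where uav: "t = (u, a, v)" by (cases t) auto
        have ua: "u \<in> FS" "v \<in> FS" "v = {w. case_nat a w \<in> u}" using t unfolding uav K_edges by auto
        obtain s where s: "s \<in> verts G" "u = ?\<phi> s" using ua(1) imgeq by blast
        obtain w where "w \<in> v" using FS_ne ua(2) by blast
        then have "case_nat a w \<in> ?\<phi> s" using ua(3) s(2) by simp
        then have "\<exists>e\<in>edges G. src G e = s \<and> lab G e = a" by (rule vf_edge)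
        then obtain e where e: "e \<in> edges G" "src G e = s" "lab G e = a" by blast
        have "?\<phi> (trg G e) = v" using vf_step[OF G(2) e(1)] e(2,3) ua(3) s(2) by simp
        then have "?\<psi> e = t" using uav e s by simp
        then show "t \<in> ?\<psi> ` edges G" using e(1) by blast
      qed
    qed
    ultimately have be: "bij_betw ?\<psi> (edges G) (edges K)" unfolding bij_betw_def by blast
    have ep: "\<forall>e\<in>edges G. src K (?\<psi> e) = ?\<phi> (src G e) \<and> trg K (?\<psi> e) = ?\<phi> (trg G e)
                    \<and> lab K (?\<psi> e) = lab G e" by (simp add: K_sel)
    have bvK: "bij_betw ?\<phi> (verts G) (verts K)" using bv by (simp only: K_sel)
    show ?thesis unfolding lg_iso_def
      apply (rule exI[of _ ?\<phi>])
      apply (rule exI[of _ ?\<psi>])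
      apply (intro conjI)
        apply (rule bvK)
       apply (rule be)
      apply (rule ep)
      done
  qed
  show ?thesis
    apply (rule conjI)
     apply (intro allI impI, elim conjE, rule c1, assumption+)
    apply (rule conjI)
     apply (rule K_all)
    apply (intro allI impI, elim conjE, rule c3, assumption+)
    done
qed

end
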